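(* Let $(\mathfrak g,\theta,d)$ be a hermitian Lie algebra with $\mathfrak g=\mathfrak k\oplus\mathfrak p$ such that $\mathfrak k/\mathfrak z(\mathfrak k)$ has no open invariant cones. Then every non-empty open invariant convex cone $W\subseteq\mathfrak g$ intersects $\mathfrak z(\mathfrak k)$.
   Context: Hermitian Lie algebra: $\mathfrak g$ a real Banach–Lie algebra, $\theta$ a continuous involutive automorphism with eigenspaces $\mathfrak k=\ker(\theta-\mathbf1)$, $\mathfrak p=\ker(\theta+\mathbf 1)$, $d\in\mathfrak z(\mathfrak k)$, such that $\mathfrak p$ is a complex Hilbert space, $\mathrm{ad}\,x|_\mathfrak p$ ($x\in\mathfrak k$) is bounded skew-hermitian, $[d,x]=ix$ for $x\in\mathfrak p$, and $\{x\in\mathfrak k:[x,\mathfrak p]=0\}\subseteq\mathfrak z(\mathfrak k)$. An open invariant cone in a Banach–Lie algebra $\mathfrak l$ is an open convex cone ($W+W\subseteq W$, $tW\subseteq W$ for $t>0$) invariant under all $e^{\mathrm{ad}\,x}$, $x\in\mathfrak l$; $\mathfrak l$ has no open invariant cones if each non-empty such cone equals $\mathfrak l$. *)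

theory Defs
  imports "HOL-Analysis.Analysis"
begin

definition banach_lie_algebra :: "('a::banach \<Rightarrow> 'a \<Rightarrow> 'a) \<Rightarrow> bool" where
  "banach_lie_algebra br \<longleftrightarrow>
     bounded_bilinear br \<and>
     (\<forall>x y. br x y = - br y x) \<and>
     (\<forall>x y z. br x (br y z) + br y (br z x) + br z (br x y) = 0)"

definition exp_ad :: "('a::banach \<Rightarrow> 'a \<Rightarrow> 'a) \<Rightarrow> 'a \<Rightarrow> 'a \<Rightarrow> 'a" where
  "exp_ad br x y = (\<Sum>n. (1 / fact n) *\<^sub>R (((br x) ^^ n) y))"

definition kpart :: "('a::banach \<Rightarrow> 'a) \<Rightarrow> 'a set" where
  "kpart \<theta> = {x. \<theta> x = x}"

definition ppart :: "('a::banach \<Rightarrow> 'a) \<Rightarrow> 'a set" where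
  "ppart \<theta> = {x. \<theta> x = - x}"

definition centre :: "('a::banach \<Rightarrow> 'a \<Rightarrow> 'a) \<Rightarrow> 'a set \<Rightarrow> 'a set" where
  "centre br L = {x \<in> L. \<forall>y \<in> L. br x y = 0}"

text \<open>P is a complex Hilbert space: complex structure given by i x = [d,x] (so that
  [d,x] = i x holds by construction), h a complex inner product (linear in the first
  argument) whose norm is equivalent to the Banach norm on P (so P is complete).\<close>
definition complex_hilbert_structure ::
  "('a::banach \<Rightarrow> 'a \<Rightarrow> 'a) \<Rightarrow> 'a \<Rightarrow> 'a set \<Rightarrow> ('a \<Rightarrow> 'a \<Rightarrow> complex) \<Rightarrow> bool" where
  "complex_hilbert_structure br d P h \<longleftrightarrow>
     (\<forall>x\<in>P. br d (br d x) = - x) \<and>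
     (\<forall>x\<in>P. \<forall>y\<in>P. \<forall>z\<in>P. h (x + y) z = h x z + h y z) \<and>
     (\<forall>x\<in>P. \<forall>y\<in>P. \<forall>r::real. h (r *\<^sub>R x) y = complex_of_real r * h x y) \<and>
     (\<forall>x\<in>P. \<forall>y\<in>P. h (br d x) y = \<i> * h x y) \<and>
     (\<forall>x\<in>P. \<forall>y\<in>P. h y x = cnj (h x y)) \<and>
     (\<forall>x\<in>P. x \<noteq> 0 \<longrightarrow> Im (h x x) = 0 \<and> Re (h x x) > 0) \<and>
     (\<exists>c C. c > 0 \<and> C > 0 \<and>
        (\<forall>x\<in>P. c * norm x \<le> sqrt (Re (h x x)) \<and> sqrt (Re (h x x)) \<le> C * norm x))"

definition hermitian_lie_algebra ::
  "('a::banach \<Rightarrow> 'a \<Rightarrow> 'a) \<Rightarrow> ('a \<Rightarrow> 'a) \<Rightarrow> 'a \<Rightarrow> ('a \<Rightarrow> 'a \<Rightarrow> complex) \<Rightarrow> bool" where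
  "hermitian_lie_algebra br \<theta> d h \<longleftrightarrow>
     banach_lie_algebra br \<and>
     bounded_linear \<theta> \<and>
     (\<forall>x y. \<theta> (br x y) = br (\<theta> x) (\<theta> y)) \<and>
     (\<forall>x. \<theta> (\<theta> x) = x) \<and>
     d \<in> centre br (kpart \<theta>) \<and>
     complex_hilbert_structure br d (ppart \<theta>) h \<and>
     (\<forall>x\<in>kpart \<theta>.
        (\<exists>B. \<forall>y\<in>ppart \<theta>. Re (h (br x y) (br x y)) \<le> B * Re (h y y)) \<and>
        (\<forall>y\<in>ppart \<theta>. \<forall>z\<in>ppart \<theta>. h (br x y) z = - h y (br x z))) \<and>
     {x \<in> kpart \<theta>. \<forall>y\<in>ppart \<theta>. br x y = 0} \<subseteq> centre br (kpart \<theta>)"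

definition open_invariant_cone :: "('a::banach \<Rightarrow> 'a \<Rightarrow> 'a) \<Rightarrow> 'a set \<Rightarrow> 'a set \<Rightarrow> bool" where
  "open_invariant_cone br L W \<longleftrightarrow>
     W \<subseteq> L \<and> openin (top_of_set L) W \<and> convex W \<and>
     (\<forall>x\<in>W. \<forall>y\<in>W. x + y \<in> W) \<and>
     (\<forall>t::real. \<forall>x\<in>W. t > 0 \<longrightarrow> t *\<^sub>R x \<in> W) \<and>
     (\<forall>x\<in>L. \<forall>y\<in>W. exp_ad br x y \<in> W)"

text \<open>The quotient L/Z has no open invariant cones: written out via preimages under the
  (open) quotient map, i.e. Z-saturated open invariant cones in L.\<close>
definition no_open_invariant_cones_mod :: "('a::banach \<Rightarrow> 'a \<Rightarrow> 'a) \<Rightarrow> 'a set \<Rightarrow> 'a set \<Rightarrow> bool" where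
  "no_open_invariant_cones_mod br L Z \<longleftrightarrow>
     (\<forall>W. open_invariant_cone br L W \<and> W \<noteq> {} \<and> (\<forall>w\<in>W. \<forall>z\<in>Z. w + z \<in> W) \<longrightarrow> W = L)"

end

theory Submission
  imports Defs
begin

lemma iter_add:
  fixes f :: "'a::real_normed_vector \<Rightarrow> 'a" and n :: nat
  assumes "bounded_linear f"
  shows "(f ^^ n) (a + b) = (f ^^ n) a + (f ^^ n) b"
  by (induction n) (simp_all add: linear_simps assms)

lemma iter_zero:
  fixes f :: "'a::real_normed_vector \<Rightarrow> 'a" and n :: nat
  assumes "bounded_linear f"
  shows "(f ^^ n) 0 = 0"
  by (induction n) (simp_all add: linear_simps assms)

lemma exp_ad_summable:
  fixes br :: "'a::banach \<Rightarrow> 'a \<Rightarrow> 'a"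
  assumes "bounded_bilinear br"
  shows "summable (\<lambda>n. (1 / fact n) *\<^sub>R (((br x) ^^ n) y))"
proof -
  obtain K where K: "K > 0" "\<And>a b. norm (br a b) \<le> norm a * norm b * K"
    using bounded_bilinear.pos_bounded[OF assms] by blast
  have bnd: "norm (((br x) ^^ n) y) \<le> (norm x * K) ^ n * norm y" for n :: nat
  proof (induction n)
    case 0 then show ?case by auto
  next
    case (Suc n)
    have "norm (((br x) ^^ Suc n) y) \<le> norm x * norm (((br x) ^^ n) y) * K"
      using K(2) by simp
    also have "\<dots> \<le> norm x * ((norm x * K) ^ n * norm y) * K"
      using Suc K(1) by (intro mult_right_mono mult_left_mono) auto
    also have "\<dots> = (norm x * K) ^ Suc n * norm y" by (simp add: algebra_simps)
    finally show ?case .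
  qed
  have "summable (\<lambda>n. (inverse (fact n) * (norm x * K) ^ n) * norm y)"
    by (intro summable_mult2 summable_exp)
  then show ?thesis
  proof (rule summable_comparison_test')
    fix n :: nat
    have "norm ((1 / fact n) *\<^sub>R (((br x) ^^ n) y)) = inverse (fact n) * norm (((br x) ^^ n) y)"
      by (simp add: divide_inverse)
    also have "\<dots> \<le> inverse (fact n) * ((norm x * K) ^ n * norm y)"
      by (rule mult_left_mono[OF bnd]) simp
    finally show "norm ((1 / fact n) *\<^sub>R (((br x) ^^ n) y)) \<le> (inverse (fact n) * (norm x * K) ^ n) * norm y"
      by (simp only: mult.assoc)
  qed
qed

theorem proposition4p11:
  fixes br :: "'a::banach \<Rightarrow> 'a \<Rightarrow> 'a" and \<theta> :: "'a \<Rightarrow> 'a" and d :: 'a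
    and h :: "'a \<Rightarrow> 'a \<Rightarrow> complex" and W :: "'a set"
  assumes "hermitian_lie_algebra br \<theta> d h"
    and "no_open_invariant_cones_mod br (kpart \<theta>) (centre br (kpart \<theta>))"
    and "open_invariant_cone br UNIV W"
    and "W \<noteq> {}"
  shows "W \<inter> centre br (kpart \<theta>) \<noteq> {}"
proof -
  note H = assms(1)[unfolded hermitian_lie_algebra_def]
  have bb: "bounded_bilinear br" using H banach_lie_algebra_def by blast
  have anti: "\<And>x y. br x y = - br y x" using H banach_lie_algebra_def by blast
  have thl: "bounded_linear \<theta>" using H by blast
  have thhom: "\<And>x y. \<theta> (br x y) = br (\<theta> x) (\<theta> y)" using H by blast
  have invol: "\<And>x. \<theta> (\<theta> x) = x" using H by blast
  have dc: "d \<in> centre br (kpart \<theta>)" using H by blast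
  have chs: "complex_hilbert_structure br d (ppart \<theta>) h" using H by blast
  have dd0: "\<forall>x\<in>ppart \<theta>. br d (br d x) = - x"
    using chs unfolding complex_hilbert_structure_def by (rule conjunct1)
  have dd: "\<And>x. x \<in> ppart \<theta> \<Longrightarrow> br d (br d x) = - x" using dd0 by blast
  note W = assms(3)[unfolded open_invariant_cone_def]
  have Wopen: "open W" using W by simp
  have Wconv: "convex W" using W by blast
  have Wadd: "\<And>x y. x \<in> W \<Longrightarrow> y \<in> W \<Longrightarrow> x + y \<in> W" using W by blast
  have Wsc: "\<And>t x. t > 0 \<Longrightarrow> x \<in> W \<Longrightarrow> t *\<^sub>R x \<in> W" using W by blast
  have Winv: "\<And>x y. y \<in> W \<Longrightarrow> exp_ad br x y \<in> W" using W by blast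
  let ?K = "kpart \<theta>" and ?Z = "centre br (kpart \<theta>)"
  have thadd: "\<And>x y. \<theta> (x + y) = \<theta> x + \<theta> y" by (simp add: linear_simps thl)
  have thsc: "\<And>r x. \<theta> (r *\<^sub>R x) = r *\<^sub>R \<theta> x" by (simp add: linear_simps thl)
  have thminus: "\<And>x y. \<theta> (x - y) = \<theta> x - \<theta> y" by (simp add: linear_simps thl)
  have th0: "\<theta> 0 = 0" by (simp add: linear_simps thl)
  have brl: "\<And>x. bounded_linear (br x)" using bounded_bilinear.bounded_linear_right[OF bb] .
  have brsr: "\<And>x r y. br x (r *\<^sub>R y) = r *\<^sub>R br x y" using bounded_bilinear.scaleR_right[OF bb] .
  have brsl: "\<And>x r y. br (r *\<^sub>R x) y = r *\<^sub>R br x y" using bounded_bilinear.scaleR_left[OF bb] .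
  have brz: "\<And>x. br x 0 = 0" using bounded_bilinear.zero_right[OF bb] .
  have Kadd: "\<And>x y. x \<in> ?K \<Longrightarrow> y \<in> ?K \<Longrightarrow> x + y \<in> ?K" by (simp add: kpart_def thadd)
  have Ksc: "\<And>r x. x \<in> ?K \<Longrightarrow> r *\<^sub>R x \<in> ?K" by (simp add: kpart_def thsc)
  have Kneg: "\<And>x. x \<in> ?K \<Longrightarrow> - x \<in> ?K" using Ksc[of _ "-1"] by simp
  have K0: "0 \<in> ?K" by (simp add: kpart_def th0)
  have Kbr: "\<And>x y. x \<in> ?K \<Longrightarrow> y \<in> ?K \<Longrightarrow> br x y \<in> ?K" by (simp add: kpart_def thhom)
  have ZK: "?Z \<subseteq> ?K" by (auto simp: centre_def)
  have Zadd: "\<And>x y. x \<in> ?Z \<Longrightarrow> y \<in> ?Z \<Longrightarrow> x + y \<in> ?Z"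
    by (auto simp: centre_def Kadd bounded_bilinear.add_left[OF bb])
  have Zsc: "\<And>r x. x \<in> ?Z \<Longrightarrow> r *\<^sub>R x \<in> ?Z"
    by (auto simp: centre_def Ksc brsl)
  have Zneg: "\<And>x. x \<in> ?Z \<Longrightarrow> - x \<in> ?Z" using Zsc[of _ "-1"] by simp
  have Z0: "0 \<in> ?Z" by (auto simp: centre_def K0 bounded_bilinear.zero_left[OF bb])
  have Zconv: "convex ?Z"
    unfolding convex_def using Zadd Zsc by blast
  have Kconv: "convex ?K"
    unfolding convex_def using Kadd Ksc by blast
  (* Step 1: W meets k *)
  obtain x where xW: "x \<in> W" using assms(4) by blast
  define a where "a = (1/2) *\<^sub>R (x + \<theta> x)"
  define b where "b = (1/2) *\<^sub>R (x - \<theta> x)"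
  define c where "c = br d b"
  have aK: "a \<in> ?K" by (simp add: kpart_def a_def thsc thadd invol)
  have bP: "b \<in> ppart \<theta>" by (simp add: ppart_def b_def thsc thminus invol algebra_simps)
  have half: "(1/2) *\<^sub>R v + (1/2) *\<^sub>R v = v" for v :: 'a
    by (simp flip: scaleR_add_left)
  have xab: "x = a + b" using half[of x] by (simp add: a_def b_def algebra_simps)
  have thab: "\<theta> x = a - b" using half[of "\<theta> x"] by (simp add: a_def b_def algebra_simps)
  have dcc: "br d c = - b" using dd[OF bP] c_def by simp
  have da: "br d a = 0" using dc aK by (auto simp: centre_def)
  define D where "D = br (pi *\<^sub>R d)"
  have DlD: "bounded_linear D" using brl D_def by simp
  have Da: "(D ^^ n) a = (if n = 0 then a else 0)" for n :: nat
  proof (induction n)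
    case 0 then show ?case by simp
  next
    case (Suc n) then show ?case
      by (auto simp: D_def brsl da brz)
  qed
  have Db: "(D ^^ n) b = (if even n then ((-1) ^ (n div 2) * pi ^ n) *\<^sub>R b
        else ((-1) ^ (n div 2) * pi ^ n) *\<^sub>R c)" for n :: nat
  proof (induction n)
    case 0 then show ?case by simp
  next
    case (Suc n)
    show ?case
    proof (cases "even n")
      case True
      then show ?thesis using Suc
        by (simp add: D_def brsl brsr c_def)
    next
      case False
      then have "Suc n div 2 = Suc (n div 2)" by presburger
      then show ?thesis using Suc False
        by (simp add: D_def brsl brsr dcc)
    qed
  qed
  have trm: "(1 / fact n) *\<^sub>R ((D ^^ n) x) =
      (if n = 0 then a else 0) + ((cos_coeff n * pi ^ n) *\<^sub>R b + (sin_coeff n * pi ^ n) *\<^sub>R c)" for n :: nat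
  proof (cases "even n")
    case True
    then show ?thesis
      by (auto simp: xab iter_add[OF DlD] Da Db cos_coeff_def sin_coeff_def scaleR_add_right)
  next
    case False
    then have "(n - Suc 0) div 2 = n div 2" by presburger
    then show ?thesis using False
      by (auto simp: xab iter_add[OF DlD] Da Db cos_coeff_def sin_coeff_def scaleR_add_right)
  qed
  have sums1: "(\<lambda>n. (1 / fact n) *\<^sub>R ((D ^^ n) x)) sums (a + (cos pi *\<^sub>R b + sin pi *\<^sub>R c))"
    unfolding trm
  proof (intro sums_add)
    show "(\<lambda>n. if n = 0 then a else 0) sums a" using sums_single[of 0 "\<lambda>_. a"] by simp
    show "(\<lambda>n. (cos_coeff n * pi ^ n) *\<^sub>R b) sums (cos pi *\<^sub>R b)"
      using sums_scaleR_left[OF cos_converges[of pi]] by simp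
    show "(\<lambda>n. (sin_coeff n * pi ^ n) *\<^sub>R c) sums (sin pi *\<^sub>R c)"
      using sums_scaleR_left[OF sin_converges[of pi]] by simp
  qed
  have "exp_ad br (pi *\<^sub>R d) x = \<theta> x"
    unfolding exp_ad_def D_def[symmetric] using sums_unique[OF sums1] thab by simp
  then have thW: "\<theta> x \<in> W" using Winv[OF xW] by metis
  have aW: "a \<in> W" unfolding a_def
    using convexD[OF Wconv xW thW, of "1/2" "1/2"] by (simp add: scaleR_add_right)
  define W' where "W' = {w + z | w z. w \<in> W \<inter> ?K \<and> z \<in> ?Z}"
  have expK: "exp_ad br y w \<in> ?K" if "y \<in> ?K" "w \<in> ?K" for y w
  proof -
    have it: "((br y) ^^ n) w \<in> ?K" for n :: nat
      by (induction n) (use that Kbr in auto)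
    have sm: "summable (\<lambda>n. (1 / fact n) *\<^sub>R (((br y) ^^ n) w))"
      using exp_ad_summable[OF bb] .
    have "\<theta> (exp_ad br y w) = (\<Sum>n. \<theta> ((1 / fact n) *\<^sub>R (((br y) ^^ n) w)))"
      unfolding exp_ad_def using bounded_linear.suminf[OF thl sm] by simp
    also have "\<dots> = exp_ad br y w"
      unfolding exp_ad_def using it by (simp add: thsc kpart_def)
    finally show ?thesis by (simp add: kpart_def)
  qed
  have expZ: "exp_ad br y (w + z) = exp_ad br y w + z" if "y \<in> ?K" "z \<in> ?Z" for y w z
  proof -
    have yz: "br y z = 0" using that anti[of y z] by (auto simp: centre_def)
    have itz: "((br y) ^^ n) z = (if n = 0 then z else 0)" for n :: nat
      by (induction n) (auto simp: yz brz)
    have eq: "(1 / fact n) *\<^sub>R (((br y) ^^ n) (w + z)) =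
        (1 / fact n) *\<^sub>R (((br y) ^^ n) w) + (if n = 0 then z else 0)" for n :: nat
      by (simp add: iter_add[OF brl] itz scaleR_add_right)
    have "(\<lambda>n. (1 / fact n) *\<^sub>R (((br y) ^^ n) (w + z))) sums (exp_ad br y w + z)"
      unfolding eq exp_ad_def
      using sums_add[OF summable_sums[OF exp_ad_summable[OF bb]] sums_single[of 0 "\<lambda>_. z"]]
      by simp
    then show ?thesis unfolding exp_ad_def by (rule sums_unique[symmetric])
  qed
  have W'K: "W' \<subseteq> ?K" using Kadd ZK by (auto simp: W'_def)
  have W'eq: "W' = ?K \<inter> (\<Union>z\<in>?Z. (\<lambda>w. z + w) ` W)"
  proof
    show "W' \<subseteq> ?K \<inter> (\<Union>z\<in>?Z. (\<lambda>w. z + w) ` W)"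
      using W'K by (auto simp: W'_def add.commute)
  next
    show "?K \<inter> (\<Union>z\<in>?Z. (\<lambda>w. z + w) ` W) \<subseteq> W'"
    proof clarify
      fix z w assume "z + w \<in> ?K" "z \<in> ?Z" "w \<in> W"
      then have "w \<in> ?K" using Kadd[of "z + w" "- z"] Kneg ZK by auto
      then show "z + w \<in> W'" unfolding W'_def using \<open>z \<in> ?Z\<close> \<open>w \<in> W\<close>
        by (auto simp: add.commute)
    qed
  qed
  have W'open: "openin (top_of_set ?K) W'"
    unfolding W'eq
    by (intro openin_open_Int open_UN ballI open_translation Wopen)
  have W'conv: "convex W'"
  proof -
    have "W' = (\<Union>x\<in> W \<inter> ?K. \<Union>y \<in> ?Z. {x + y})" unfolding W'_def by blast
    then show ?thesis by (simp add: convex_sums convex_Int Wconv Kconv Zconv)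
  qed
  have W'cone: "open_invariant_cone br ?K W'"
    unfolding open_invariant_cone_def
  proof (intro conjI ballI allI impI)
    show "W' \<subseteq> ?K" by fact
    show "openin (top_of_set ?K) W'" by fact
    show "convex W'" by fact
    fix u v assume "u \<in> W'" "v \<in> W'"
    then obtain w1 z1 w2 z2 where "u = w1 + z1" "v = w2 + z2" "w1 \<in> W \<inter> ?K" "z1 \<in> ?Z"
      "w2 \<in> W \<inter> ?K" "z2 \<in> ?Z" by (auto simp: W'_def)
    then show "u + v \<in> W'" unfolding W'_def
      by (intro CollectI exI[of _ "w1 + w2"] exI[of _ "z1 + z2"])
        (auto simp: algebra_simps Wadd Kadd Zadd)
  next
    fix t :: real and u assume "t > 0" "u \<in> W'"
    then obtain w z where "u = w + z" "w \<in> W \<inter> ?K" "z \<in> ?Z" by (auto simp: W'_def)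
    then show "t *\<^sub>R u \<in> W'" unfolding W'_def using \<open>t > 0\<close>
      by (intro CollectI exI[of _ "t *\<^sub>R w"] exI[of _ "t *\<^sub>R z"])
        (auto simp: scaleR_add_right Wsc Ksc Zsc)
  next
    fix y u assume "y \<in> ?K" "u \<in> W'"
    then obtain w z where "u = w + z" "w \<in> W \<inter> ?K" "z \<in> ?Z" by (auto simp: W'_def)
    then show "exp_ad br y u \<in> W'" unfolding W'_def using \<open>y \<in> ?K\<close>
      by (intro CollectI exI[of _ "exp_ad br y w"] exI[of _ z])
        (auto simp: expZ expK Winv)
  qed
  have W'ne: "W' \<noteq> {}" using aW aK Z0 unfolding W'_def by force
  have W'sat: "\<forall>w\<in>W'. \<forall>z\<in>?Z. w + z \<in> W'"
  proof (intro ballI)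
    fix u z assume "u \<in> W'" "z \<in> ?Z"
    then obtain w z' where "u = w + z'" "w \<in> W \<inter> ?K" "z' \<in> ?Z" by (auto simp: W'_def)
    then show "u + z \<in> W'" unfolding W'_def using \<open>z \<in> ?Z\<close>
      by (intro CollectI exI[of _ w] exI[of _ "z' + z"]) (auto simp: algebra_simps Zadd)
  qed
  have "W' = ?K" using assms(2) W'cone W'ne W'sat
    unfolding no_open_invariant_cones_mod_def by blast
  then have "0 \<in> W'" using K0 by simp
  then obtain w z where "0 = w + z" "w \<in> W" "z \<in> ?Z" by (auto simp: W'_def)
  then have "w = - z" by (simp add: eq_neg_iff_add_eq_0)
  then have "w \<in> ?Z" using Zneg \<open>z \<in> ?Z\<close> by simp
  then show ?thesis using \<open>w \<in> W\<close> by blast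
qed

end
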